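(* Let $X$, $A$, $B$, $C$, $Y$, $H$, $V$, $G_+$, $G_-$ be as in the context. Then $G_+$ and $G_-$ are closed and quasi-accretive. In particular, for $G\in\{G_+,G_-\}$ and all $\xi\in D(H)$, $\mathrm{Re}(\xi|G\xi)\geqslant-(\mu_B+|V|)(\xi|\xi)$, where one may take $\mu_B:=0$ if $B$ is symmetric and $\mu_B:=\|B\|$ if $B$ is bounded.
   Context: $(X,\langle\cdot|\cdot\rangle)$ is a nontrivial complex Hilbert space with norm $\|\cdot\|$. $A:D(A)\to X$ is a densely defined self-adjoint linear operator with $\langle\xi|A\xi\rangle\geqslant\varepsilon\langle\xi|\xi\rangle$ for all $\xi\in D(A)$ for some $\varepsilon>0$; $A^{1/2}$ is its positive self-adjoint square root. $B:D(A^{1/2})\to X$ is linear with $\|B\xi\|^2\leqslant a^2\|A^{1/2}\xi\|^2+b^2\|\xi\|^2$ for all $\xi\in D(A^{1/2})$, for some $a\in[0,1)$, $b\in\mathbb{R}$, and $B$ is symmetric or bounded. $C:D(A^{1/2})\to X$ is linear with $\|C\xi\|^2\leqslant c^2\|A^{1/2}\xi\|^2+d^2\|\xi\|^2$ for all $\xi\in D(A^{1/2})$, for some real $c,d$. $Y:=D(A^{1/2})\times X$ with inner product $(\xi|\eta):=\langle A^{1/2}\xi_1|A^{1/2}\eta_1\rangle+\langle\xi_2|\eta_2\rangle$; $|V|$ is the operator norm of $V$ on $Y$. $H:D(A)\times D(A^{1/2})\to Y$, $H\xi:=(-i\xi_2,iA\xi_1)$; $\hat B:D(H)\to Y$, $\hat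 B\xi:=(0,-B\xi_2)$; $V:Y\to Y$, $V\xi:=(0,iC\xi_1)$ (a bounded operator); $G_+:=-i(H+\hat B+V)$, $G_-:=i(H+\hat B+V)$ with domain $D(H)$. An operator $G$ is quasi-accretive if there is $\omega\in\mathbb{R}$ with $\mathrm{Re}(\xi|G\xi)\geqslant-\omega(\xi|\xi)$ for all $\xi\in D(G)$. *)

theory Defs
  imports Complex_Main
begin

text \<open>A complex Hilbert space is modelled by a carrier type 'x (an additive abelian
group), a complex scalar multiplication sm and an inner product ip which is
conjugate-linear in the first and linear in the second argument.\<close>

definition complex_hilbert :: "(complex \<Rightarrow> 'x::ab_group_add \<Rightarrow> 'x) \<Rightarrow> ('x \<Rightarrow> 'x \<Rightarrow> complex) \<Rightarrow> bool" where
  "complex_hilbert sm ip \<longleftrightarrow>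
     (\<forall>a x y. sm a (x + y) = sm a x + sm a y) \<and>
     (\<forall>a b x. sm (a + b) x = sm a x + sm b x) \<and>
     (\<forall>a b x. sm a (sm b x) = sm (a * b) x) \<and>
     (\<forall>x. sm 1 x = x) \<and>
     (\<forall>x y z. ip x (y + z) = ip x y + ip x z) \<and>
     (\<forall>a x y. ip x (sm a y) = a * ip x y) \<and>
     (\<forall>x y. ip y x = cnj (ip x y)) \<and>
     (\<forall>x. 0 \<le> Re (ip x x)) \<and>
     (\<forall>x. ip x x = 0 \<longrightarrow> x = 0) \<and>
     (\<forall>f :: nat \<Rightarrow> 'x.
        (\<forall>e>0. \<exists>N. \<forall>m\<ge>N. \<forall>n\<ge>N. sqrt (Re (ip (f m - f n) (f m - f n))) < e) \<longrightarrow>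
        (\<exists>l. (\<lambda>n. sqrt (Re (ip (f n - l) (f n - l)))) \<longlonglongrightarrow> 0))"

definition hnorm :: "('x::ab_group_add \<Rightarrow> 'x \<Rightarrow> complex) \<Rightarrow> 'x \<Rightarrow> real" where
  "hnorm ip x = sqrt (Re (ip x x))"

definition subspace_h :: "(complex \<Rightarrow> 'x::ab_group_add \<Rightarrow> 'x) \<Rightarrow> 'x set \<Rightarrow> bool" where
  "subspace_h sm D \<longleftrightarrow> 0 \<in> D \<and> (\<forall>x\<in>D. \<forall>y\<in>D. x + y \<in> D) \<and> (\<forall>a. \<forall>x\<in>D. sm a x \<in> D)"

definition linear_on :: "(complex \<Rightarrow> 'x::ab_group_add \<Rightarrow> 'x) \<Rightarrow> 'x set \<Rightarrow> ('x \<Rightarrow> 'x) \<Rightarrow> bool" where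
  "linear_on sm D T \<longleftrightarrow> subspace_h sm D \<and>
     (\<forall>x\<in>D. \<forall>y\<in>D. T (x + y) = T x + T y) \<and> (\<forall>a. \<forall>x\<in>D. T (sm a x) = sm a (T x))"

definition dense_h :: "('x::ab_group_add \<Rightarrow> 'x \<Rightarrow> complex) \<Rightarrow> 'x set \<Rightarrow> bool" where
  "dense_h ip D \<longleftrightarrow> (\<forall>x. \<forall>e>0. \<exists>y\<in>D. hnorm ip (x - y) < e)"

text \<open>Self-adjointness of a densely defined operator T with domain D:
  D(T*) = D and T* = T, where D(T*) = {eta. exists z. forall xi in D. <eta|T xi> = <z|xi>}.\<close>

definition selfadjoint_h :: "('x::ab_group_add \<Rightarrow> 'x \<Rightarrow> complex) \<Rightarrow> 'x set \<Rightarrow> ('x \<Rightarrow> 'x) \<Rightarrow> bool" where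
  "selfadjoint_h ip D T \<longleftrightarrow>
     (\<forall>\<eta>. (\<exists>z. \<forall>\<xi>\<in>D. ip \<eta> (T \<xi>) = ip z \<xi>) \<longleftrightarrow> \<eta> \<in> D) \<and>
     (\<forall>\<eta>\<in>D. \<forall>\<xi>\<in>D. ip \<eta> (T \<xi>) = ip (T \<eta>) \<xi>)"

definition pos_sqrt_of :: "(complex \<Rightarrow> 'x::ab_group_add \<Rightarrow> 'x) \<Rightarrow> ('x \<Rightarrow> 'x \<Rightarrow> complex) \<Rightarrow>
    'x set \<Rightarrow> ('x \<Rightarrow> 'x) \<Rightarrow> 'x set \<Rightarrow> ('x \<Rightarrow> 'x) \<Rightarrow> bool" where
  "pos_sqrt_of sm ip DS S DA A \<longleftrightarrow>
     linear_on sm DS S \<and> dense_h ip DS \<and> selfadjoint_h ip DS S \<and>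
     (\<forall>\<xi>\<in>DS. 0 \<le> Re (ip \<xi> (S \<xi>))) \<and>
     DA = {\<xi> \<in> DS. S \<xi> \<in> DS} \<and> (\<forall>\<xi>\<in>DA. S (S \<xi>) = A \<xi>)"

definition symmetric_on :: "('x::ab_group_add \<Rightarrow> 'x \<Rightarrow> complex) \<Rightarrow> 'x set \<Rightarrow> ('x \<Rightarrow> 'x) \<Rightarrow> bool" where
  "symmetric_on ip D T \<longleftrightarrow> (\<forall>\<xi>\<in>D. \<forall>\<eta>\<in>D. ip (T \<xi>) \<eta> = ip \<xi> (T \<eta>))"

definition bounded_on :: "('x::ab_group_add \<Rightarrow> 'x \<Rightarrow> complex) \<Rightarrow> 'x set \<Rightarrow> ('x \<Rightarrow> 'x) \<Rightarrow> bool" where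
  "bounded_on ip D T \<longleftrightarrow> (\<exists>K. \<forall>\<xi>\<in>D. hnorm ip (T \<xi>) \<le> K * hnorm ip \<xi>)"

definition opnorm_on :: "('x::ab_group_add \<Rightarrow> 'x \<Rightarrow> complex) \<Rightarrow> 'x set \<Rightarrow> ('x \<Rightarrow> 'x) \<Rightarrow> real" where
  "opnorm_on ip D T = Sup {hnorm ip (T \<xi>) | \<xi>. \<xi> \<in> D \<and> hnorm ip \<xi> \<le> 1}"

section \<open>The energy space Y = D(A^(1/2)) x X\<close>

definition Yspace :: "'x set \<Rightarrow> ('x \<times> 'x) set" where
  "Yspace DS = DS \<times> UNIV"

definition yip :: "('x::ab_group_add \<Rightarrow> 'x \<Rightarrow> complex) \<Rightarrow> ('x \<Rightarrow> 'x) \<Rightarrow> 'x \<times> 'x \<Rightarrow> 'x \<times> 'x \<Rightarrow> complex" where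
  "yip ip S \<xi> \<eta> = ip (S (fst \<xi>)) (S (fst \<eta>)) + ip (snd \<xi>) (snd \<eta>)"

definition ynorm :: "('x::ab_group_add \<Rightarrow> 'x \<Rightarrow> complex) \<Rightarrow> ('x \<Rightarrow> 'x) \<Rightarrow> 'x \<times> 'x \<Rightarrow> real" where
  "ynorm ip S \<xi> = sqrt (Re (yip ip S \<xi> \<xi>))"

definition ysm :: "(complex \<Rightarrow> 'x \<Rightarrow> 'x) \<Rightarrow> complex \<Rightarrow> 'x \<times> 'x \<Rightarrow> 'x \<times> 'x" where
  "ysm sm a \<xi> = (sm a (fst \<xi>), sm a (snd \<xi>))"

definition yadd :: "'x::ab_group_add \<times> 'x \<Rightarrow> 'x \<times> 'x \<Rightarrow> 'x \<times> 'x" where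
  "yadd \<xi> \<eta> = (fst \<xi> + fst \<eta>, snd \<xi> + snd \<eta>)"

definition ydiff :: "'x::ab_group_add \<times> 'x \<Rightarrow> 'x \<times> 'x \<Rightarrow> 'x \<times> 'x" where
  "ydiff \<xi> \<eta> = (fst \<xi> - fst \<eta>, snd \<xi> - snd \<eta>)"

definition yopnorm :: "('x::ab_group_add \<Rightarrow> 'x \<Rightarrow> complex) \<Rightarrow> 'x set \<Rightarrow> ('x \<Rightarrow> 'x) \<Rightarrow>
    ('x \<times> 'x \<Rightarrow> 'x \<times> 'x) \<Rightarrow> real" where
  "yopnorm ip DS S T = Sup {ynorm ip S (T \<xi>) | \<xi>. \<xi> \<in> Yspace DS \<and> ynorm ip S \<xi> \<le> 1}"

definition yclosed :: "('x::ab_group_add \<Rightarrow> 'x \<Rightarrow> complex) \<Rightarrow> 'x set \<Rightarrow> ('x \<Rightarrow> 'x) \<Rightarrow>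
    ('x \<times> 'x) set \<Rightarrow> ('x \<times> 'x \<Rightarrow> 'x \<times> 'x) \<Rightarrow> bool" where
  "yclosed ip DS S D G \<longleftrightarrow>
     (\<forall>f :: nat \<Rightarrow> 'x \<times> 'x. \<forall>x y.
        (\<forall>n. f n \<in> D) \<longrightarrow> x \<in> Yspace DS \<longrightarrow> y \<in> Yspace DS \<longrightarrow>
        (\<lambda>n. ynorm ip S (ydiff (f n) x)) \<longlonglongrightarrow> 0 \<longrightarrow>
        (\<lambda>n. ynorm ip S (ydiff (G (f n)) y)) \<longlonglongrightarrow> 0 \<longrightarrow>
        x \<in> D \<and> G x = y)"

definition yquasi_accretive :: "('x::ab_group_add \<Rightarrow> 'x \<Rightarrow> complex) \<Rightarrow> ('x \<Rightarrow> 'x) \<Rightarrow>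
    ('x \<times> 'x) set \<Rightarrow> ('x \<times> 'x \<Rightarrow> 'x \<times> 'x) \<Rightarrow> bool" where
  "yquasi_accretive ip S D G \<longleftrightarrow>
     (\<exists>\<omega>::real. \<forall>\<xi>\<in>D. Re (yip ip S \<xi> (G \<xi>)) \<ge> - \<omega> * Re (yip ip S \<xi> \<xi>))"

definition DH :: "'x set \<Rightarrow> 'x set \<Rightarrow> ('x \<times> 'x) set" where
  "DH DA DS = DA \<times> DS"

definition Hop :: "(complex \<Rightarrow> 'x \<Rightarrow> 'x) \<Rightarrow> ('x \<Rightarrow> 'x) \<Rightarrow> 'x \<times> 'x \<Rightarrow> 'x \<times> 'x" where
  "Hop sm A \<xi> = (sm (- \<i>) (snd \<xi>), sm \<i> (A (fst \<xi>)))"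

definition Bhat :: "('x::ab_group_add \<Rightarrow> 'x) \<Rightarrow> 'x \<times> 'x \<Rightarrow> 'x \<times> 'x" where
  "Bhat B \<xi> = (0, - B (snd \<xi>))"

definition Vop :: "(complex \<Rightarrow> 'x \<Rightarrow> 'x) \<Rightarrow> ('x::ab_group_add \<Rightarrow> 'x) \<Rightarrow> 'x \<times> 'x \<Rightarrow> 'x \<times> 'x" where
  "Vop sm C \<xi> = (0, sm \<i> (C (fst \<xi>)))"

definition Gplus :: "(complex \<Rightarrow> 'x \<Rightarrow> 'x) \<Rightarrow> ('x::ab_group_add \<Rightarrow> 'x) \<Rightarrow> ('x \<Rightarrow> 'x) \<Rightarrow> ('x \<Rightarrow> 'x) \<Rightarrow> 'x \<times> 'x \<Rightarrow> 'x \<times> 'x" where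
  "Gplus sm A B C \<xi> = ysm sm (- \<i>) (yadd (yadd (Hop sm A \<xi>) (Bhat B \<xi>)) (Vop sm C \<xi>))"

definition Gminus :: "(complex \<Rightarrow> 'x \<Rightarrow> 'x) \<Rightarrow> ('x::ab_group_add \<Rightarrow> 'x) \<Rightarrow> ('x \<Rightarrow> 'x) \<Rightarrow> ('x \<Rightarrow> 'x) \<Rightarrow> 'x \<times> 'x \<Rightarrow> 'x \<times> 'x" where
  "Gminus sm A B C \<xi> = ysm sm \<i> (yadd (yadd (Hop sm A \<xi>) (Bhat B \<xi>)) (Vop sm C \<xi>))"

end

theory Submission
  imports Defs
begin


lemma sq0: fixes f g :: "nat \<Rightarrow> real"
  assumes "\<And>n. 0 \<le> f n" "\<And>n. f n \<le> g n" "g \<longlonglongrightarrow> 0" shows "f \<longlonglongrightarrow> 0"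
  by (rule tendsto_sandwich[of "\<lambda>_. 0" _ _ g]) (use assms in auto)

locale chs =
  fixes sm :: "complex \<Rightarrow> 'x::ab_group_add \<Rightarrow> 'x" and ip :: "'x \<Rightarrow> 'x \<Rightarrow> complex"
  assumes hilb: "complex_hilbert sm ip"
begin

lemmas ax = hilb[unfolded complex_hilbert_def]
lemma sm_add: "sm a (x + y) = sm a x + sm a y" using ax[THEN conjunct1] by blast
lemma sm_ladd: "sm (a + b) x = sm a x + sm b x" using ax[THEN conjunct2, THEN conjunct1] by blast
lemma sm_sm: "sm a (sm b x) = sm (a * b) x" using ax[THEN conjunct2, THEN conjunct2, THEN conjunct1] by blast
lemma sm_one[simp]: "sm 1 x = x" using ax[THEN conjunct2, THEN conjunct2, THEN conjunct2, THEN conjunct1] by blast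
lemma ip_radd: "ip x (y + z) = ip x y + ip x z" using ax[THEN conjunct2, THEN conjunct2, THEN conjunct2, THEN conjunct2, THEN conjunct1] by blast
lemma ip_rsm: "ip x (sm a y) = a * ip x y" using ax[THEN conjunct2, THEN conjunct2, THEN conjunct2, THEN conjunct2, THEN conjunct2, THEN conjunct1] by blast
lemma ip_sym: "ip y x = cnj (ip x y)" using ax[THEN conjunct2, THEN conjunct2, THEN conjunct2, THEN conjunct2, THEN conjunct2, THEN conjunct2, THEN conjunct1] by blast
lemma ip_pos: "0 \<le> Re (ip x x)" using ax[THEN conjunct2, THEN conjunct2, THEN conjunct2, THEN conjunct2, THEN conjunct2, THEN conjunct2, THEN conjunct2, THEN conjunct1] by blast
lemma ip_def0: "ip x x = 0 \<Longrightarrow> x = 0" using ax[THEN conjunct2, THEN conjunct2, THEN conjunct2, THEN conjunct2, THEN conjunct2, THEN conjunct2, THEN conjunct2, THEN conjunct2, THEN conjunct1] by blast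
lemma complete: "(\<forall>e>0. \<exists>N. \<forall>m\<ge>N. \<forall>n\<ge>N. sqrt (Re (ip (f m - f n) (f m - f n))) < e) \<Longrightarrow>
        (\<exists>l. (\<lambda>n. sqrt (Re (ip (f n - l) (f n - l)))) \<longlonglongrightarrow> 0)"
  using ax[THEN conjunct2, THEN conjunct2, THEN conjunct2, THEN conjunct2, THEN conjunct2, THEN conjunct2, THEN conjunct2, THEN conjunct2, THEN conjunct2] by blast

lemma sm_0l[simp]: "sm 0 x = 0"
proof -
  have "sm 0 x = sm 0 x + sm 0 x" using sm_ladd[of 0 0 x] by simp
  thus ?thesis by simp
qed
lemma sm_0r[simp]: "sm a 0 = 0"
proof -
  have "sm a 0 = sm a 0 + sm a 0" using sm_add[of a 0 0] by simp
  thus ?thesis by simp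
qed
lemma sm_minus: "sm a (- x) = - sm a x"
proof -
  have "sm a x + sm a (-x) = 0" using sm_add[of a x "-x"] by simp
  thus ?thesis by (simp add: eq_neg_iff_add_eq_0 add.commute)
qed
lemma sm_diff: "sm a (x - y) = sm a x - sm a y"
  using sm_add[of a x "-y"] sm_minus by simp
lemma sm_lminus: "sm (- a) x = - sm a x"
proof -
  have "sm a x + sm (-a) x = 0" using sm_ladd[of a "-a" x] by simp
  thus ?thesis by (simp add: eq_neg_iff_add_eq_0 add.commute)
qed
lemma sm_ldiff: "sm (a - b) x = sm a x - sm b x"
  using sm_ladd[of a "-b" x] sm_lminus by simp

lemma ip_ladd: "ip (x + y) z = ip x z + ip y z"
  by (metis complex_cnj_add ip_radd ip_sym)
lemma ip_lsm: "ip (sm a x) y = cnj a * ip x y"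
  by (metis complex_cnj_mult ip_rsm ip_sym)
lemma ip_r0[simp]: "ip x 0 = 0" using ip_rsm[of x 0 0] by simp
lemma ip_l0[simp]: "ip 0 x = 0" using ip_lsm[of 0 0 x] by simp
lemma ip_rminus: "ip x (- y) = - ip x y"
  using ip_radd[of x y "-y"] by (simp add: eq_neg_iff_add_eq_0 add.commute)
lemma ip_lminus: "ip (- x) y = - ip x y"
  using ip_ladd[of x "-x" y] by (simp add: eq_neg_iff_add_eq_0 add.commute)
lemma ip_rdiff: "ip x (y - z) = ip x y - ip x z"
  using ip_radd[of x y "-z"] ip_rminus by simp
lemma ip_ldiff: "ip (x - y) z = ip x z - ip y z"
  using ip_ladd[of x "-y" z] ip_lminus by simp
lemma ip_self_real: "Im (ip x x) = 0"
proof -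
  have "Im (ip x x) = Im (cnj (ip x x))" using ip_sym[of x x] by simp
  thus ?thesis by simp
qed

abbreviation nm where "nm x \<equiv> hnorm ip x"

lemma nm_sq: "(nm x)\<^sup>2 = Re (ip x x)"
  unfolding hnorm_def using ip_pos[of x] by simp
lemma nm_nonneg[simp]: "0 \<le> nm x" unfolding hnorm_def using ip_pos[of x] by simp
lemma ip_self: "ip x x = complex_of_real ((nm x)\<^sup>2)"
  using ip_self_real[of x] nm_sq[of x] by (simp add: complex_eq_iff)
lemma nm_0_iff[simp]: "nm x = 0 \<longleftrightarrow> x = 0"
proof
  assume "nm x = 0" then have "ip x x = 0" using ip_self[of x] by simp
  then show "x = 0" by (rule ip_def0)
next
  assume "x = 0" thus "nm x = 0" by (simp add: hnorm_def)
qed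
lemma nm_0[simp]: "nm 0 = 0" by simp

lemma nm_add_sq: "(nm (x + y))\<^sup>2 = (nm x)\<^sup>2 + 2 * Re (ip x y) + (nm y)\<^sup>2"
proof -
  have "ip (x + y) (x + y) = ip x x + ip x y + ip y x + ip y y"
    by (simp add: ip_radd ip_ladd)
  moreover have "Re (ip y x) = Re (ip x y)" using ip_sym[of x y] by simp
  ultimately show ?thesis by (simp add: nm_sq)
qed
lemma nm_diff_sq: "(nm (x - y))\<^sup>2 = (nm x)\<^sup>2 - 2 * Re (ip x y) + (nm y)\<^sup>2"
proof -
  have "ip (x - y) (x - y) = ip x x - ip x y - ip y x + ip y y"
    by (simp add: ip_rdiff ip_ldiff)
  moreover have "Re (ip y x) = Re (ip x y)" using ip_sym[of x y] by simp
  ultimately show ?thesis by (simp add: nm_sq)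
qed
lemma nm_sm: "nm (sm a x) = cmod a * nm x"
proof -
  have "ip (sm a x) (sm a x) = (cnj a * a) * ip x x" by (simp add: ip_lsm ip_rsm)
  also have "cnj a * a = complex_of_real ((cmod a)\<^sup>2)" by (metis complex_norm_square mult.commute)
  finally have "Re (ip (sm a x) (sm a x)) = (cmod a)\<^sup>2 * Re (ip x x)" by simp
  then have "(nm (sm a x))\<^sup>2 = ((cmod a * nm x))\<^sup>2"
    unfolding nm_sq power_mult_distrib by simp
  thus ?thesis by (simp add: power2_eq_iff_nonneg)
qed
lemma nm_minus: "nm (- x) = nm x"
  using nm_sm[of "-1" x] sm_lminus[of 1 x] by simp
lemma nm_commute: "nm (x - y) = nm (y - x)"
  using nm_minus[of "x - y"] by simp

lemma cs: "cmod (ip x y) \<le> nm x * nm y"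
proof (cases "y = 0 \<or> ip x y = 0")
  case True then show ?thesis by auto
next
  case False
  define p where "p = ip x y"
  have yn: "nm y > 0" using False nm_nonneg[of y] nm_0_iff[of y] by linarith
  have pn: "cmod p > 0" using False p_def by simp
  define w where "w = cnj p / complex_of_real (cmod p)"
  have wp: "ip x (sm w y) = complex_of_real (cmod p)"
  proof -
    have "ip x (sm w y) = cnj p * p / complex_of_real (cmod p)" by (simp add: ip_rsm w_def p_def)
    also have "cnj p * p = complex_of_real (cmod p) * complex_of_real (cmod p)"
      by (metis complex_norm_square mult.commute of_real_mult power2_eq_square)
    finally show ?thesis using pn by simp
  qed
  have cw: "cmod w = 1" using pn by (simp add: w_def norm_divide)
  have key: "0 \<le> (nm x)\<^sup>2 - 2 * t * cmod p + t\<^sup>2 * (nm y)\<^sup>2" for t :: real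
  proof -
    have "0 \<le> (nm (x - sm (complex_of_real t) (sm w y)))\<^sup>2" by simp
    also have "\<dots> = (nm x)\<^sup>2 - 2 * t * cmod p + t\<^sup>2 * (nm y)\<^sup>2"
    proof -
      have "Re (ip x (sm (complex_of_real t) (sm w y))) = t * cmod p"
        using ip_rsm[of x "complex_of_real t" "sm w y"] wp by simp
      moreover have "nm (sm (complex_of_real t) (sm w y)) = \<bar>t\<bar> * nm y"
        unfolding nm_sm cw by simp
      ultimately show ?thesis unfolding nm_diff_sq by (simp add: power_mult_distrib)
    qed
    finally show ?thesis .
  qed
  define N where "N = (nm y)\<^sup>2"
  have Np: "N > 0" using yn unfolding N_def by (rule zero_less_power)
  have e1: "(cmod p / N)\<^sup>2 * N = (cmod p)\<^sup>2 / N" using Np by (simp add: power2_eq_square)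
  have e2: "2 * (cmod p / N) * cmod p = 2 * ((cmod p)\<^sup>2 / N)" by (simp add: power2_eq_square)
  have "0 \<le> (nm x)\<^sup>2 - (cmod p)\<^sup>2 / N"
    using key[of "cmod p / N"] unfolding N_def[symmetric] e1 e2 by linarith
  then have "(cmod p)\<^sup>2 / N \<le> (nm x)\<^sup>2" by linarith
  then have "(cmod p)\<^sup>2 \<le> (nm x)\<^sup>2 * N" using Np by (simp add: pos_divide_le_eq)
  then have "(cmod p)\<^sup>2 \<le> (nm x * nm y)\<^sup>2" by (simp add: N_def power_mult_distrib)
  then show ?thesis unfolding p_def by (rule power2_le_imp_le) simp
qed

lemma re_ip_le: "Re (ip x y) \<le> nm x * nm y"
  using cs[of x y] complex_Re_le_cmod order_trans by blast
lemma abs_re_ip_le: "\<bar>Re (ip x y)\<bar> \<le> nm x * nm y"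
  using cs[of x y] abs_Re_le_cmod order_trans by blast
lemma abs_im_ip_le: "\<bar>Im (ip x y)\<bar> \<le> nm x * nm y"
  using cs[of x y] abs_Im_le_cmod order_trans by blast

lemma nm_triangle: "nm (x + y) \<le> nm x + nm y"
proof -
  have "(nm (x + y))\<^sup>2 \<le> (nm x + nm y)\<^sup>2"
    unfolding nm_add_sq using re_ip_le[of x y] by (simp add: power2_sum)
  then show ?thesis by (rule power2_le_imp_le) simp
qed
lemma nm_triangle_diff: "nm (x - y) \<le> nm x + nm y"
  using nm_triangle[of x "-y"] nm_minus[of y] by simp
lemma nm_tri3: "nm (x - z) \<le> nm (x - y) + nm (y - z)"
  using nm_triangle[of "x - y" "y - z"] by simp

lemma parallelogram: "(nm (x + y))\<^sup>2 + (nm (x - y))\<^sup>2 = 2 * (nm x)\<^sup>2 + 2 * (nm y)\<^sup>2"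
  unfolding nm_add_sq nm_diff_sq by simp


lemma nm_rev: "nm a \<le> nm (a - b) + nm b"
  using nm_triangle[of "a - b" b] by simp
lemma nm_rev_abs: "\<bar>nm a - nm b\<bar> \<le> nm (a - b)"
  using nm_rev[of a b] nm_rev[of b a] nm_commute[of a b] by linarith

definition conv :: "(nat \<Rightarrow> 'x) \<Rightarrow> 'x \<Rightarrow> bool" where
  "conv f l \<longleftrightarrow> (\<lambda>n. nm (f n - l)) \<longlonglongrightarrow> 0"
definition cauchy :: "(nat \<Rightarrow> 'x) \<Rightarrow> bool" where
  "cauchy f \<longleftrightarrow> (\<forall>e>0. \<exists>N. \<forall>m\<ge>N. \<forall>n\<ge>N. nm (f m - f n) < e)"

lemma cauchy_conv: "cauchy f \<Longrightarrow> \<exists>l. conv f l"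
  using complete[of f] unfolding cauchy_def conv_def hnorm_def by blast

lemma conv_by: "(\<And>n. nm (g n - m) \<le> h n) \<Longrightarrow> h \<longlonglongrightarrow> 0 \<Longrightarrow> conv g m"
  unfolding conv_def by (rule sq0) auto

lemma conv_const: "conv (\<lambda>n. l) l" unfolding conv_def by simp

lemma conv_add: "conv f l \<Longrightarrow> conv g k \<Longrightarrow> conv (\<lambda>n. f n + g n) (l + k)"
proof -
  assume a: "conv f l" "conv g k"
  show ?thesis
  proof (rule conv_by)
    show "nm (f n + g n - (l + k)) \<le> nm (f n - l) + nm (g n - k)" for n
    proof -
      have "f n + g n - (l + k) = (f n - l) + (g n - k)" by (simp add: algebra_simps)
      then show ?thesis by (simp only:) (rule nm_triangle)
    qed
    show "(\<lambda>n. nm (f n - l) + nm (g n - k)) \<longlonglongrightarrow> 0"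
      using tendsto_add[OF a[unfolded conv_def]] by simp
  qed
qed
lemma conv_minus: "conv f l \<Longrightarrow> conv (\<lambda>n. - f n) (- l)"
proof -
  have "nm (- f n - - l) = nm (f n - l)" for n
    using nm_minus[of "f n - l"] by (simp add: algebra_simps)
  then show "conv f l \<Longrightarrow> ?thesis" unfolding conv_def by simp
qed
lemma conv_diff: "conv f l \<Longrightarrow> conv g k \<Longrightarrow> conv (\<lambda>n. f n - g n) (l - k)"
  using conv_add[of f l "\<lambda>n. - g n" "- k"] conv_minus[of g k] by simp
lemma conv_sm: "conv f l \<Longrightarrow> conv (\<lambda>n. sm a (f n)) (sm a l)"
proof -
  assume a: "conv f l"
  have e: "nm (sm a (f n) - sm a l) = cmod a * nm (f n - l)" for n
    by (simp only: sm_diff[symmetric] nm_sm)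
  show ?thesis unfolding conv_def e
    using a unfolding conv_def by (rule tendsto_mult_right_zero)
qed
lemma conv_unique: "conv f l \<Longrightarrow> conv f k \<Longrightarrow> l = k"
proof -
  assume a: "conv f l" "conv f k"
  have "(\<lambda>n. nm (l - k)) \<longlonglongrightarrow> 0"
  proof (rule sq0[of _ "\<lambda>n. nm (f n - l) + nm (f n - k)"])
    show "nm (l - k) \<le> nm (f n - l) + nm (f n - k)" for n
      using nm_tri3[where x=l and y="f n" and z=k] nm_commute[of l "f n"] by linarith
    show "(\<lambda>n. nm (f n - l) + nm (f n - k)) \<longlonglongrightarrow> 0"
      using a unfolding conv_def using tendsto_add[of _ 0 _ _ 0] by fastforce
  qed simp
  then have "nm (l - k) = 0" by (simp add: LIMSEQ_const_iff)
  then show ?thesis by simp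
qed
lemma conv_0_iff: "conv f l \<longleftrightarrow> conv (\<lambda>n. f n - l) 0"
  unfolding conv_def by simp

lemma conv_ip_r: "conv f l \<Longrightarrow> (\<lambda>n. ip y (f n)) \<longlonglongrightarrow> ip y l"
proof -
  assume a: "conv f l"
  have "(\<lambda>n. norm (ip y (f n) - ip y l)) \<longlonglongrightarrow> 0"
  proof (rule sq0[of _ "\<lambda>n. nm y * nm (f n - l)"])
    show "norm (ip y (f n) - ip y l) \<le> nm y * nm (f n - l)" for n
      using cs[of y "f n - l"] by (simp add: ip_rdiff)
    show "(\<lambda>n. nm y * nm (f n - l)) \<longlonglongrightarrow> 0"
      using a unfolding conv_def by (rule tendsto_mult_right_zero)
  qed simp
  then show ?thesis using tendsto_norm_zero_iff LIM_zero_iff by blast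
qed
lemma conv_ip_l: "conv f l \<Longrightarrow> (\<lambda>n. ip (f n) y) \<longlonglongrightarrow> ip l y"
proof -
  assume "conv f l"
  then have "(\<lambda>n. cnj (ip y (f n))) \<longlonglongrightarrow> cnj (ip y l)" using conv_ip_r tendsto_cnj by blast
  moreover have "(\<lambda>n. ip (f n) y) = (\<lambda>n. cnj (ip y (f n)))" "ip l y = cnj (ip y l)"
    by (rule ext, rule ip_sym) (rule ip_sym)
  ultimately show ?thesis by simp
qed
lemma conv_nm: "conv f l \<Longrightarrow> (\<lambda>n. nm (f n)) \<longlonglongrightarrow> nm l"
proof -
  assume a: "conv f l"
  have "(\<lambda>n. norm (nm (f n) - nm l)) \<longlonglongrightarrow> 0"
    apply (rule sq0[of _ "\<lambda>n. nm (f n - l)"])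
    using a nm_rev_abs unfolding conv_def by auto
  then show ?thesis using tendsto_norm_zero_iff LIM_zero_iff by blast
qed
lemma conv_cauchy: "conv f l \<Longrightarrow> cauchy f"
  unfolding cauchy_def
proof (intro allI impI)
  fix e :: real assume "conv f l" "e > 0"
  then obtain N where N: "\<forall>n\<ge>N. nm (f n - l) < e / 2"
  proof -
    assume a: "conv f l" "e > 0"
    have "\<forall>r>0. \<exists>no. \<forall>n\<ge>no. nm (f n - l) < r"
      using a(1) unfolding conv_def LIMSEQ_iff by simp
    then have "\<exists>N. \<forall>n\<ge>N. nm (f n - l) < e / 2" using a(2) half_gt_zero by blast
    then show ?thesis using that by blast
  qed
  show "\<exists>N. \<forall>m\<ge>N. \<forall>n\<ge>N. nm (f m - f n) < e"
  proof (intro exI allI impI)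
    fix m n assume "m \<ge> N" "n \<ge> N"
    then have "nm (f m - l) < e / 2" "nm (f n - l) < e / 2" using N by auto
    then show "nm (f m - f n) < e" using nm_tri3[where x="f m" and y=l and z="f n"] nm_commute[of l "f n"]
      by linarith
  qed
qed
lemma cauchy_by: "cauchy g \<Longrightarrow> (\<And>m n. nm (f m - f n) \<le> K * nm (g m - g n)) \<Longrightarrow> cauchy f"
  unfolding cauchy_def
proof (intro allI impI)
  fix e :: real assume c: "\<forall>e>0. \<exists>N. \<forall>m\<ge>N. \<forall>n\<ge>N. nm (g m - g n) < e" and b: "\<And>m n. nm (f m - f n) \<le> K * nm (g m - g n)" and e: "e > 0"
  define K' where "K' = max K 1"
  have K': "K' > 0" "K \<le> K'" by (auto simp: K'_def)
  obtain N where N: "\<forall>m\<ge>N. \<forall>n\<ge>N. nm (g m - g n) < e / K'" using c K' e by (meson divide_pos_pos)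
  show "\<exists>N. \<forall>m\<ge>N. \<forall>n\<ge>N. nm (f m - f n) < e"
  proof (intro exI allI impI)
    fix m n assume mn: "m \<ge> N" "n \<ge> N"
    have "nm (f m - f n) \<le> K' * nm (g m - g n)" using b[of m n] K'
      by (meson mult_right_mono nm_nonneg order_trans)
    also have "\<dots> < K' * (e / K')" using N mn K' by (intro mult_strict_left_mono) auto
    finally show "nm (f m - f n) < e" using K' by simp
  qed
qed

lemma lin_sub: "linear_on sm D T \<Longrightarrow> subspace_h sm D"
  unfolding linear_on_def by blast
lemma lin_0: "linear_on sm D T \<Longrightarrow> 0 \<in> D \<and> T 0 = 0"
  unfolding linear_on_def subspace_h_def by (metis sm_0l)
lemma lin_add: "linear_on sm D T \<Longrightarrow> x \<in> D \<Longrightarrow> y \<in> D \<Longrightarrow> x + y \<in> D \<and> T (x + y) = T x + T y"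
  unfolding linear_on_def subspace_h_def by blast
lemma lin_sm: "linear_on sm D T \<Longrightarrow> x \<in> D \<Longrightarrow> sm a x \<in> D \<and> T (sm a x) = sm a (T x)"
  unfolding linear_on_def subspace_h_def by blast
lemma lin_minus: "linear_on sm D T \<Longrightarrow> x \<in> D \<Longrightarrow> - x \<in> D \<and> T (- x) = - T x"
  using lin_sm[of D T x "-1"] sm_lminus[of 1] by simp
lemma lin_diff: "linear_on sm D T \<Longrightarrow> x \<in> D \<Longrightarrow> y \<in> D \<Longrightarrow> x - y \<in> D \<and> T (x - y) = T x - T y"
  using lin_add[of D T x "-y"] lin_minus[of D T y] by simp

lemma dense_orth: "dense_h ip D \<Longrightarrow> (\<And>\<xi>. \<xi> \<in> D \<Longrightarrow> ip w \<xi> = 0) \<Longrightarrow> w = 0"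
proof (rule ccontr)
  assume d: "dense_h ip D" and o: "\<And>\<xi>. \<xi> \<in> D \<Longrightarrow> ip w \<xi> = 0" and w: "w \<noteq> 0"
  then have p: "nm w > 0" using nm_nonneg[of w] nm_0_iff[of w] by linarith
  then obtain \<xi> where \<xi>: "\<xi> \<in> D" "nm (w - \<xi>) < nm w" using d unfolding dense_h_def by blast
  have "(nm w)\<^sup>2 = Re (ip w (w - \<xi>))" using o[OF \<xi>(1)] by (simp add: ip_rdiff nm_sq)
  also have "\<dots> \<le> nm w * nm (w - \<xi>)" by (rule re_ip_le)
  also have "\<dots> < nm w * nm w" using p \<xi>(2) by simp
  finally show False by (simp add: power2_eq_square)
qed

lemma sa_closed:
  assumes lin: "linear_on sm D T" and dn: "dense_h ip D" and sa: "selfadjoint_h ip D T"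
    and f: "\<And>n. f n \<in> D" and cf: "conv f x" and cT: "conv (\<lambda>n. T (f n)) y"
  shows "x \<in> D \<and> T x = y"
proof -
  have e: "ip x (T \<xi>) = ip y \<xi>" if "\<xi> \<in> D" for \<xi>
  proof -
    have "(\<lambda>n. ip (f n) (T \<xi>)) \<longlonglongrightarrow> ip x (T \<xi>)" using cf by (rule conv_ip_l)
    moreover have "(\<lambda>n. ip (f n) (T \<xi>)) = (\<lambda>n. ip (T (f n)) \<xi>)"
      using sa f that unfolding selfadjoint_h_def by blast
    moreover have "(\<lambda>n. ip (T (f n)) \<xi>) \<longlonglongrightarrow> ip y \<xi>" using cT by (rule conv_ip_l)
    ultimately show ?thesis using LIMSEQ_unique by metis
  qed
  then have xD: "x \<in> D" using sa unfolding selfadjoint_h_def by blast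
  have "T x - y = 0"
  proof (rule dense_orth[OF dn])
    fix \<xi> assume "\<xi> \<in> D"
    then have "ip (T x) \<xi> = ip x (T \<xi>)" using sa xD unfolding selfadjoint_h_def by metis
    then show "ip (T x - y) \<xi> = 0" using e[OF \<open>\<xi> \<in> D\<close>] by (simp add: ip_ldiff)
  qed
  then show ?thesis using xD by simp
qed

end


lemma real_orth: fixes R M :: real assumes M: "M \<ge> 0" and h: "\<And>t. 2 * t * R \<le> t\<^sup>2 * M" shows "R = 0"
proof (rule ccontr)
  assume R: "R \<noteq> 0"
  define t where "t = R / (M + 1)"
  have M1: "M + 1 > 0" using M by simp
  have e1: "2 * t * R = 2 * (R\<^sup>2 / (M + 1))" by (simp add: t_def power2_eq_square)
  have e2: "t\<^sup>2 * M = (R\<^sup>2 / (M + 1)) * (M / (M + 1))" by (simp add: t_def power2_eq_square)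
  have "M / (M + 1) \<le> 1" using M1 by simp
  moreover have "R\<^sup>2 / (M + 1) \<ge> 0" using M1 by simp
  ultimately have "(R\<^sup>2 / (M + 1)) * (M / (M + 1)) \<le> R\<^sup>2 / (M + 1)"
    using mult_left_le by blast
  then have "2 * (R\<^sup>2 / (M + 1)) \<le> R\<^sup>2 / (M + 1)" using h[of t] e1 e2 by linarith
  moreover have "R\<^sup>2 / (M + 1) > 0" using R M1 by simp
  ultimately show False by linarith
qed

locale setting = chs sm ip
  for sm :: "complex \<Rightarrow> 'x::ab_group_add \<Rightarrow> 'x" and ip +
  fixes DA DS :: "'x set" and A S :: "'x \<Rightarrow> 'x" and \<epsilon> :: real
  assumes A_lin: "linear_on sm DA A" and A_dense: "dense_h ip DA" and A_sa: "selfadjoint_h ip DA A"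
  and eps_pos: "\<epsilon> > 0" and A_coercive: "\<forall>\<xi>\<in>DA. Re (ip \<xi> (A \<xi>)) \<ge> \<epsilon> * Re (ip \<xi> \<xi>)"
  and S_sqrt: "pos_sqrt_of sm ip DS S DA A"
begin

lemma S_lin: "linear_on sm DS S" using S_sqrt unfolding pos_sqrt_of_def by blast
lemma S_dense: "dense_h ip DS" using S_sqrt unfolding pos_sqrt_of_def by blast
lemma S_sa: "selfadjoint_h ip DS S" using S_sqrt unfolding pos_sqrt_of_def by blast
lemma DA_eq: "DA = {\<xi> \<in> DS. S \<xi> \<in> DS}" using S_sqrt unfolding pos_sqrt_of_def by blast
lemma SS: "\<xi> \<in> DA \<Longrightarrow> S (S \<xi>) = A \<xi>" using S_sqrt unfolding pos_sqrt_of_def by blast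
lemma DA_sub: "\<xi> \<in> DA \<Longrightarrow> \<xi> \<in> DS \<and> S \<xi> \<in> DS" using DA_eq by blast
lemma S_sym: "\<xi> \<in> DS \<Longrightarrow> \<eta> \<in> DS \<Longrightarrow> ip (S \<xi>) \<eta> = ip \<xi> (S \<eta>)"
  using S_sa unfolding selfadjoint_h_def by metis
lemma A_form: "\<xi> \<in> DA \<Longrightarrow> ip \<xi> (A \<xi>) = ip (S \<xi>) (S \<xi>)"
  using S_sym[of \<xi> "S \<xi>"] DA_sub[of \<xi>] SS[of \<xi>] by simp
lemma coer_S: "\<xi> \<in> DA \<Longrightarrow> \<epsilon> * (nm \<xi>)\<^sup>2 \<le> (nm (S \<xi>))\<^sup>2"
proof -
  assume x: "\<xi> \<in> DA"
  have "\<epsilon> * Re (ip \<xi> \<xi>) \<le> Re (ip \<xi> (A \<xi>))" using A_coercive x by blast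
  then show ?thesis using A_form[OF x] by (simp add: nm_sq)
qed
lemma coer_A: "\<xi> \<in> DA \<Longrightarrow> \<epsilon> * nm \<xi> \<le> nm (A \<xi>)"
proof -
  assume x: "\<xi> \<in> DA"
  have "\<epsilon> * (nm \<xi>)\<^sup>2 \<le> Re (ip \<xi> (A \<xi>))" using A_coercive x by (simp add: nm_sq)
  also have "\<dots> \<le> nm \<xi> * nm (A \<xi>)" by (rule re_ip_le)
  finally have "nm \<xi> * (\<epsilon> * nm \<xi>) \<le> nm \<xi> * nm (A \<xi>)" by (simp add: power2_eq_square mult_ac)
  then show ?thesis
  proof (cases "nm \<xi> = 0")
    case False then have "nm \<xi> > 0" using nm_nonneg[of \<xi>] by linarith
    then show ?thesis using \<open>nm \<xi> * (\<epsilon> * nm \<xi>) \<le> nm \<xi> * nm (A \<xi>)\<close> by (simp add: mult_le_cancel_left_pos)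
  qed (simp)
qed

lemma A_closed: "(\<And>n. f n \<in> DA) \<Longrightarrow> conv f x \<Longrightarrow> conv (\<lambda>n. A (f n)) y \<Longrightarrow> x \<in> DA \<and> A x = y"
  using sa_closed[OF A_lin A_dense A_sa] by blast
lemma S_closed: "(\<And>n. f n \<in> DS) \<Longrightarrow> conv f x \<Longrightarrow> conv (\<lambda>n. S (f n)) y \<Longrightarrow> x \<in> DS \<and> S x = y"
  using sa_closed[OF S_lin S_dense S_sa] by blast

lemma S_inj0: "\<xi> \<in> DS \<Longrightarrow> S \<xi> = 0 \<Longrightarrow> \<xi> = 0"
proof -
  assume a: "\<xi> \<in> DS" "S \<xi> = 0"
  then have "\<xi> \<in> DA" using DA_eq lin_0[OF S_lin] by auto
  then have "\<epsilon> * (nm \<xi>)\<^sup>2 \<le> 0" using coer_S[of \<xi>] a by simp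
  then show ?thesis using eps_pos by (simp add: mult_le_0_iff)
qed


lemma A_orth_zero: assumes o: "\<And>v. v \<in> DA \<Longrightarrow> ip z (A v) = 0" shows "z = 0"
proof -
  have "\<forall>\<xi>\<in>DA. ip z (A \<xi>) = ip 0 \<xi>" using o by simp
  then have zD: "z \<in> DA" using A_sa unfolding selfadjoint_h_def by blast
  have "A z = 0"
  proof (rule dense_orth[OF A_dense])
    fix \<xi> assume "\<xi> \<in> DA"
    then have "ip (A z) \<xi> = ip z (A \<xi>)" using A_sa zD unfolding selfadjoint_h_def by metis
    then show "ip (A z) \<xi> = 0" using o[OF \<open>\<xi> \<in> DA\<close>] by simp
  qed
  then have "\<epsilon> * nm z \<le> 0" using coer_A[OF zD] by simp
  then show ?thesis using eps_pos nm_nonneg[of z] nm_0_iff[of z] by (simp add: mult_le_0_iff)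
qed

lemma A_surj: "\<exists>u\<in>DA. A u = y"
proof -
  define M where "M = {nm (y - A u) | u. u \<in> DA}"
  define \<delta> where "\<delta> = Inf M"
  have Mne: "M \<noteq> {}" using lin_0[OF A_lin] M_def by blast
  have Mbdd: "bdd_below M" unfolding M_def bdd_below_def by (rule exI[of _ 0]) auto
  have dle: "\<delta> \<le> nm (y - A u)" if "u \<in> DA" for u
    unfolding \<delta>_def using Mbdd that M_def by (auto intro: cInf_lower)
  have d0: "\<delta> \<ge> 0" unfolding \<delta>_def using Mne by (rule cInf_greatest) (auto simp: M_def)
  have ex: "\<exists>u. u \<in> DA \<and> nm (y - A u) < \<delta> + 1 / (real n + 1)" for n
  proof -
    have "Inf M < \<delta> + 1 / (real n + 1)" unfolding \<delta>_def by simp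
    then obtain m where "m \<in> M" "m < \<delta> + 1 / (real n + 1)" using cInf_less_iff[OF Mne Mbdd] by blast
    then show ?thesis unfolding M_def by blast
  qed
  obtain u where u': "\<forall>n. u n \<in> DA \<and> nm (y - A (u n)) < \<delta> + 1 / (real n + 1)"
    using choice[of "\<lambda>n u. u \<in> DA \<and> nm (y - A u) < \<delta> + 1 / (real n + 1)"] ex by blast
  then have u: "\<And>n. u n \<in> DA" "\<And>n. nm (y - A (u n)) < \<delta> + 1 / (real n + 1)" by auto
  define c where "c = 2 * \<delta> + 1"
  have c: "c > 0" using d0 c_def by simp
  have usq: "(nm (y - A (u n)))\<^sup>2 \<le> \<delta>\<^sup>2 + c / (real n + 1)" for n
  proof -
    define h where "h = 1 / (real n + 1)"
    have h0: "0 \<le> h" "h \<le> 1" unfolding h_def by (auto simp: field_simps)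
    have "nm (y - A (u n)) \<le> \<delta> + h" using u(2)[of n] unfolding h_def by simp
    then have "(nm (y - A (u n)))\<^sup>2 \<le> (\<delta> + h)\<^sup>2" by (rule power_mono) simp
    also have "\<dots> = \<delta>\<^sup>2 + 2 * \<delta> * h + h * h"
      by (simp add: power2_eq_square algebra_simps)
    also have "h * h \<le> h" using h0 by (simp add: mult_left_le)
    also have "c / (real n + 1) = c * h" unfolding h_def by simp
    ultimately show ?thesis unfolding c_def by (simp add: algebra_simps)
  qed
  have par: "(nm (A (u m) - A (u n)))\<^sup>2 \<le> 2 * c / (real m + 1) + 2 * c / (real n + 1)" for m n
  proof -
    define a where "a = y - A (u n)"
    define b where "b = y - A (u m)"
    define v where "v = sm (1/2) (u n + u m)"
    have vD: "v \<in> DA" unfolding v_def using lin_add[OF A_lin u(1) u(1)] lin_sm[OF A_lin] by blast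
    have Av: "A v = sm (1/2) (A (u n) + A (u m))"
      unfolding v_def using lin_add[OF A_lin u(1) u(1)] lin_sm[OF A_lin] by metis
    have two: "sm 2 x = x + x" for x using sm_ladd[of 1 1 x] by simp
    have "sm 2 (y - A v) = sm 2 y - sm 2 (sm (1/2) (A (u n) + A (u m)))" unfolding Av sm_diff ..
    also have "\<dots> = a + b" unfolding sm_sm two a_def b_def by (simp add: algebra_simps)
    finally have ab: "nm (a + b) = 2 * nm (y - A v)" using nm_sm[of 2 "y - A v"] by simp
    then have "nm (a + b) \<ge> 2 * \<delta>" using dle[OF vD] by simp
    then have ab2: "(nm (a + b))\<^sup>2 \<ge> 4 * \<delta>\<^sup>2"
      using d0 power_mono[of "2 * \<delta>" "nm (a + b)" 2] by (simp add: power_mult_distrib)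
    have "a - b = A (u m) - A (u n)" unfolding a_def b_def by simp
    then have "(nm (A (u m) - A (u n)))\<^sup>2 = 2 * (nm a)\<^sup>2 + 2 * (nm b)\<^sup>2 - (nm (a + b))\<^sup>2"
      using parallelogram[of a b] by simp
    also have "\<dots> \<le> 2 * (\<delta>\<^sup>2 + c / (real n + 1)) + 2 * (\<delta>\<^sup>2 + c / (real m + 1)) - 4 * \<delta>\<^sup>2"
      using usq[of n] usq[of m] ab2 unfolding a_def b_def by (smt (verit))
    finally show ?thesis by simp
  qed
  have cA: "cauchy (\<lambda>n. A (u n))"
    unfolding cauchy_def
  proof (intro allI impI)
    fix e :: real assume e: "e > 0"
    obtain N :: nat where N: "real N > 4 * c / e\<^sup>2" using reals_Archimedean2 by blast
    show "\<exists>N. \<forall>m\<ge>N. \<forall>n\<ge>N. nm (A (u m) - A (u n)) < e"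
    proof (intro exI allI impI)
      fix m n assume mn: "m \<ge> N" "n \<ge> N"
      have e2: "e\<^sup>2 > 0" using e by simp
      have "4 * c / e\<^sup>2 < real N + 1" using N by simp
      then have Nb: "4 * c / (real N + 1) < e\<^sup>2" using e2 by (simp add: field_simps)
      have "2 * c / (real m + 1) \<le> 2 * c / (real N + 1)" using mn c
        by (intro divide_left_mono) auto
      moreover have "2 * c / (real n + 1) \<le> 2 * c / (real N + 1)" using mn c
        by (intro divide_left_mono) auto
      ultimately have "(nm (A (u m) - A (u n)))\<^sup>2 < e\<^sup>2" using par[of m n] Nb by simp
      then show "nm (A (u m) - A (u n)) < e" using e by (simp add: power_less_imp_less_base)
    qed
  qed
  then obtain w where w: "conv (\<lambda>n. A (u n)) w" using cauchy_conv by blast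
  have "cauchy u"
  proof (rule cauchy_by[OF cA])
    fix m n
    have "u m - u n \<in> DA" "A (u m - u n) = A (u m) - A (u n)" using lin_diff[OF A_lin u(1) u(1)] by auto
    then have "\<epsilon> * nm (u m - u n) \<le> nm (A (u m) - A (u n))" using coer_A by metis
    then show "nm (u m - u n) \<le> (1 / \<epsilon>) * nm (A (u m) - A (u n))" using eps_pos by (simp add: field_simps)
  qed
  then obtain u0 where "conv u u0" using cauchy_conv by blast
  then have u0: "u0 \<in> DA" "A u0 = w" using A_closed[OF u(1) _ w] by auto
  define z where "z = y - w"
  have "conv (\<lambda>n. y - A (u n)) z" unfolding z_def using conv_diff[OF conv_const w] .
  then have lim: "(\<lambda>n. nm (y - A (u n))) \<longlonglongrightarrow> nm z" by (rule conv_nm)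
  have "(\<lambda>n. \<delta> + 1 / (real n + 1)) \<longlonglongrightarrow> \<delta> + 0"
  proof (intro tendsto_add tendsto_const)
    show "(\<lambda>n. 1 / (real n + 1)) \<longlonglongrightarrow> 0"
      using LIMSEQ_inverse_real_of_nat by (simp add: inverse_eq_divide add.commute)
  qed
  then have lim2: "(\<lambda>n. \<delta> + 1 / (real n + 1)) \<longlonglongrightarrow> \<delta>" by simp
  have "\<exists>N. \<forall>n\<ge>N. nm (y - A (u n)) \<le> \<delta> + 1 / (real n + 1)" using u(2) less_imp_le by blast
  then have zle: "nm z \<le> \<delta>" using LIMSEQ_le[OF lim lim2] by blast
  have "ip z (A v) = 0" if vD: "v \<in> DA" for v
  proof -
    have R0: "Re (ip z (A x)) = 0" if xD: "x \<in> DA" for x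
    proof (rule real_orth)
      show "(nm (A x))\<^sup>2 \<ge> 0" by simp
      fix t :: real
      define tx where "tx = sm (complex_of_real t) x"
      have txD: "tx \<in> DA" "A tx = sm (complex_of_real t) (A x)"
        unfolding tx_def using lin_sm[OF A_lin xD] by blast+
      have tD: "u0 + tx \<in> DA" "A (u0 + tx) = w + sm (complex_of_real t) (A x)"
        using lin_add[OF A_lin u0(1) txD(1)] txD(2) u0(2) by auto
      have "y - A (u0 + tx) = z - sm (complex_of_real t) (A x)"
        unfolding tD(2) z_def by (simp add: algebra_simps)
      then have "nm z \<le> nm (z - sm (complex_of_real t) (A x))"
        using dle[OF tD(1)] zle by simp
      then have "(nm z)\<^sup>2 \<le> (nm (z - sm (complex_of_real t) (A x)))\<^sup>2" by (rule power_mono) simp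
      also have "\<dots> = (nm z)\<^sup>2 - 2 * (t * Re (ip z (A x))) + t\<^sup>2 * (nm (A x))\<^sup>2"
      proof -
        have "Re (ip z (sm (complex_of_real t) (A x))) = t * Re (ip z (A x))"
          unfolding ip_rsm by simp
        moreover have "nm (sm (complex_of_real t) (A x)) = \<bar>t\<bar> * nm (A x)"
          unfolding nm_sm by simp
        ultimately show ?thesis unfolding nm_diff_sq by (simp add: power_mult_distrib)
      qed
      finally show "2 * t * Re (ip z (A x)) \<le> t\<^sup>2 * (nm (A x))\<^sup>2" by simp
    qed
    have re: "Re (ip z (A v)) = 0" using R0[OF vD] .
    have ivD: "sm \<i> v \<in> DA" "A (sm \<i> v) = sm \<i> (A v)" using lin_sm[OF A_lin vD] by blast+
    have "Re (ip z (A (sm \<i> v))) = 0" using R0[OF ivD(1)] .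
    then have im: "Im (ip z (A v)) = 0" unfolding ivD(2) ip_rsm by simp
    show ?thesis using re im by (simp add: complex_eq_iff)
  qed
  then have "z = 0" by (rule A_orth_zero)
  then have "y = w" unfolding z_def by simp
  then show ?thesis using u0 by blast
qed

lemma K: "\<xi> \<in> DS \<Longrightarrow> \<epsilon> * (nm \<xi>)\<^sup>2 \<le> (nm (S \<xi>))\<^sup>2"
proof -
  assume xD: "\<xi> \<in> DS"
  obtain \<zeta> where z: "\<zeta> \<in> DA" "A \<zeta> = \<xi>" using A_surj by blast
  have zz: "\<zeta> \<in> DS" "S \<zeta> \<in> DS" using DA_sub[OF z(1)] by auto
  define x where "x = nm \<xi>"
  define q where "q = nm (S \<xi>)"
  define s where "s = nm (S \<zeta>)"
  define r where "r = nm \<zeta>"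
  have x0: "x \<ge> 0" and q0: "q \<ge> 0" and s0: "s \<ge> 0" and r0: "r \<ge> 0" unfolding x_def q_def s_def r_def by simp_all
  have h1: "x\<^sup>2 \<le> q * s"
  proof -
    have "ip \<xi> \<xi> = ip \<xi> (S (S \<zeta>))" using z SS by simp
    also have "\<dots> = ip (S \<xi>) (S \<zeta>)" using S_sym[OF xD zz(2)] by simp
    finally show ?thesis unfolding x_def q_def s_def nm_sq using re_ip_le by metis
  qed
  have h2: "s\<^sup>2 \<le> r * x"
  proof -
    have "Re (ip (S \<zeta>) (S \<zeta>)) = Re (ip \<zeta> \<xi>)" using A_form[OF z(1)] z(2) by simp
    then show ?thesis unfolding x_def r_def s_def nm_sq using re_ip_le by metis
  qed
  have h3: "\<epsilon> * r\<^sup>2 \<le> s\<^sup>2" unfolding r_def s_def by (rule coer_S[OF z(1)])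
  have h4: "\<epsilon> * r \<le> x"
  proof (cases "r = 0")
    case True then show ?thesis using x0 by simp
  next
    case False then have "r > 0" using r0 by simp
    have "r * (\<epsilon> * r) \<le> r * x" using h2 h3 by (simp add: power2_eq_square mult_ac)
    then show ?thesis using \<open>r > 0\<close> by (simp add: mult_le_cancel_left_pos)
  qed
  have h5: "\<epsilon> * s\<^sup>2 \<le> x\<^sup>2"
  proof -
    have "\<epsilon> * s\<^sup>2 \<le> \<epsilon> * (r * x)" using h2 eps_pos by simp
    also have "\<dots> = (\<epsilon> * r) * x" by simp
    also have "\<dots> \<le> x * x" using h4 x0 by (simp add: mult_right_mono)
    finally show ?thesis by (simp add: power2_eq_square)
  qed
  show ?thesis
  proof (cases "x = 0")
    case True then show ?thesis unfolding x_def by simp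
  next
    case False then have xp: "x > 0" using x0 by simp
    have "\<epsilon> * (x\<^sup>2 * x\<^sup>2) \<le> \<epsilon> * ((q * s) * (q * s))"
      using mult_mono[OF h1 h1] eps_pos x0 q0 s0 by (intro mult_left_mono) auto
    also have "\<dots> = q\<^sup>2 * (\<epsilon> * s\<^sup>2)" by (simp add: power2_eq_square mult_ac)
    also have "\<dots> \<le> q\<^sup>2 * x\<^sup>2" using h5 by (simp add: mult_left_mono)
    finally have "x\<^sup>2 * (\<epsilon> * x\<^sup>2) \<le> x\<^sup>2 * q\<^sup>2" by (simp add: mult_ac)
    then have "\<epsilon> * x\<^sup>2 \<le> q\<^sup>2" using xp by (simp add: mult_le_cancel_left_pos)
    then show ?thesis unfolding x_def q_def .
  qed
qed

end


context chs begin
lemma rel_bound: assumes "(nm y)\<^sup>2 \<le> c\<^sup>2 * (nm s)\<^sup>2 + d\<^sup>2 * (nm z)\<^sup>2"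
  shows "nm y \<le> \<bar>c\<bar> * nm s + \<bar>d\<bar> * nm z"
proof -
  have "(nm y)\<^sup>2 \<le> (\<bar>c\<bar> * nm s + \<bar>d\<bar> * nm z)\<^sup>2"
  proof -
    have "0 \<le> 2 * (\<bar>c\<bar> * nm s) * (\<bar>d\<bar> * nm z)" by simp
    moreover have "(\<bar>c\<bar> * nm s + \<bar>d\<bar> * nm z)\<^sup>2 = c\<^sup>2 * (nm s)\<^sup>2 + d\<^sup>2 * (nm z)\<^sup>2 + 2 * (\<bar>c\<bar> * nm s) * (\<bar>d\<bar> * nm z)"
      by (simp add: power2_sum power_mult_distrib)
    ultimately show ?thesis using assms by linarith
  qed
  then show ?thesis by (rule power2_le_imp_le) simp
qed
end

locale full = setting sm ip DA DS A S \<epsilon>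
  for sm :: "complex \<Rightarrow> 'x::ab_group_add \<Rightarrow> 'x" and ip DA DS A S \<epsilon> +
  fixes B C :: "'x \<Rightarrow> 'x" and aa bb cc dd :: real
  assumes B_lin: "linear_on sm DS B"
    and B_rel: "\<forall>\<xi>\<in>DS. (hnorm ip (B \<xi>))\<^sup>2 \<le> aa\<^sup>2 * (hnorm ip (S \<xi>))\<^sup>2 + bb\<^sup>2 * (hnorm ip \<xi>)\<^sup>2"
    and C_lin: "linear_on sm DS C"
    and C_rel: "\<forall>\<xi>\<in>DS. (hnorm ip (C \<xi>))\<^sup>2 \<le> cc\<^sup>2 * (hnorm ip (S \<xi>))\<^sup>2 + dd\<^sup>2 * (hnorm ip \<xi>)\<^sup>2"
begin

lemma S0: "S 0 = 0" using lin_0[OF S_lin] by simp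
lemma DS0: "0 \<in> DS" using lin_0[OF S_lin] by simp

lemma Gplus_eq: "Gplus sm A B C (p, q) = (- q, A p + sm \<i> (B q) + C p)"
proof -
  have 1: "sm (- \<i>) (sm (- \<i>) q + 0 + 0) = - q" using sm_sm[of "-\<i>" "-\<i>" q] sm_lminus[of 1 q] by simp
  have 2: "sm (- \<i>) (sm \<i> X) = X" for X using sm_sm[of "-\<i>" "\<i>" X] by simp
  have 3: "sm (- \<i>) (- X) = sm \<i> X" for X using sm_minus[of "-\<i>" X] sm_lminus[of "\<i>" X] by simp
  have 4: "sm (- \<i>) (sm \<i> (A p) + - B q + sm \<i> (C p)) = A p + sm \<i> (B q) + C p"
    unfolding sm_add 2 3 ..
  show ?thesis
    unfolding Gplus_def ysm_def yadd_def Hop_def Bhat_def Vop_def fst_conv snd_conv 1 4 ..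
qed

lemma Gminus_eq: "Gminus sm A B C (p, q) = (q, - (A p + sm \<i> (B q) + C p))"
proof -
  have 1: "sm \<i> (sm (- \<i>) q + 0 + 0) = q" using sm_sm[of "\<i>" "-\<i>" q] by simp
  have 2: "sm \<i> (sm \<i> X) = - X" for X using sm_sm[of "\<i>" "\<i>" X] sm_lminus[of 1 X] by simp
  have 3: "sm \<i> (- X) = - sm \<i> X" for X using sm_minus[of "\<i>" X] by simp
  have 4: "sm \<i> (sm \<i> (A p) + - B q + sm \<i> (C p)) = - (A p + sm \<i> (B q) + C p)"
    unfolding sm_add 2 3 by (simp add: algebra_simps)
  show ?thesis
    unfolding Gminus_def ysm_def yadd_def Hop_def Bhat_def Vop_def fst_conv snd_conv 1 4 ..
qed

lemma Re_yip_self: "Re (yip ip S \<xi> \<xi>) = (nm (S (fst \<xi>)))\<^sup>2 + (nm (snd \<xi>))\<^sup>2"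
  unfolding yip_def by (simp add: nm_sq)
lemma ynorm_eq: "ynorm ip S \<xi> = sqrt ((nm (S (fst \<xi>)))\<^sup>2 + (nm (snd \<xi>))\<^sup>2)"
  unfolding ynorm_def Re_yip_self ..
lemma ynorm_sq: "(ynorm ip S \<xi>)\<^sup>2 = Re (yip ip S \<xi> \<xi>)"
  unfolding ynorm_eq Re_yip_self by simp
lemma ynorm_ge1: "nm (S (fst \<xi>)) \<le> ynorm ip S \<xi>"
  unfolding ynorm_eq by (rule real_le_rsqrt) simp
lemma ynorm_ge2: "nm (snd \<xi>) \<le> ynorm ip S \<xi>"
  unfolding ynorm_eq by (rule real_le_rsqrt) simp
lemma ynorm_nonneg: "0 \<le> ynorm ip S \<xi>"
  unfolding ynorm_eq by simp


lemma Kn: "\<xi> \<in> DS \<Longrightarrow> sqrt \<epsilon> * nm \<xi> \<le> nm (S \<xi>)"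
proof -
  assume "\<xi> \<in> DS"
  then have "\<epsilon> * (nm \<xi>)\<^sup>2 \<le> (nm (S \<xi>))\<^sup>2" by (rule K)
  then have "sqrt (\<epsilon> * (nm \<xi>)\<^sup>2) \<le> sqrt ((nm (S \<xi>))\<^sup>2)" by (rule real_sqrt_le_mono)
  then show ?thesis using eps_pos by (simp add: real_sqrt_mult)
qed
lemma Kn': "\<xi> \<in> DS \<Longrightarrow> nm \<xi> \<le> (1 / sqrt \<epsilon>) * nm (S \<xi>)"
  using Kn[of \<xi>] eps_pos by (simp add: field_simps)

lemma acc_plus: assumes p: "p \<in> DA" and q: "q \<in> DS"
  shows "Re (yip ip S (p, q) (Gplus sm A B C (p, q))) = - Im (ip q (B q)) + Re (ip q (C p))"
proof -
  have pp: "p \<in> DS" "S p \<in> DS" using DA_sub[OF p] by auto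
  have Sm: "S (- q) = - S q" using lin_minus[OF S_lin q] by simp
  have Aq: "ip q (A p) = cnj (ip (S p) (S q))"
    using S_sym[OF q pp(2)] SS[OF p] ip_sym[of "S p" "S q"] by simp
  have "yip ip S (p, q) (Gplus sm A B C (p, q)) =
      - ip (S p) (S q) + (cnj (ip (S p) (S q)) + \<i> * ip q (B q) + ip q (C p))"
    unfolding Gplus_eq yip_def fst_conv snd_conv Sm ip_rminus ip_radd ip_rsm Aq ..
  then show ?thesis by simp
qed

lemma acc_minus: assumes p: "p \<in> DA" and q: "q \<in> DS"
  shows "yip ip S (p, q) (Gminus sm A B C (p, q)) = - yip ip S (p, q) (Gplus sm A B C (p, q))"
proof -
  have Sm: "S (- q) = - S q" using lin_minus[OF S_lin q] by simp
  show ?thesis unfolding Gplus_eq Gminus_eq yip_def fst_conv snd_conv Sm ip_rminus by simp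
qed

lemma ynormV: "ynorm ip S (Vop sm C \<xi>) = nm (C (fst \<xi>))"
  unfolding ynorm_eq Vop_def fst_conv snd_conv S0 nm_sm by simp

lemma Vbdd: "bdd_above {ynorm ip S (Vop sm C \<xi>) | \<xi>. \<xi> \<in> Yspace DS \<and> ynorm ip S \<xi> \<le> 1}"
  unfolding bdd_above_def
proof (intro exI ballI)
  fix r assume "r \<in> {ynorm ip S (Vop sm C \<xi>) | \<xi>. \<xi> \<in> Yspace DS \<and> ynorm ip S \<xi> \<le> 1}"
  then obtain \<xi> where x: "\<xi> \<in> Yspace DS" "ynorm ip S \<xi> \<le> 1" "r = ynorm ip S (Vop sm C \<xi>)" by blast
  have x1: "fst \<xi> \<in> DS" using x(1) unfolding Yspace_def by auto
  have s1: "nm (S (fst \<xi>)) \<le> 1" using ynorm_ge1[of \<xi>] x(2) by linarith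
  have n1: "nm (fst \<xi>) \<le> 1 / sqrt \<epsilon>"
  proof -
    have "nm (fst \<xi>) \<le> (1 / sqrt \<epsilon>) * nm (S (fst \<xi>))" by (rule Kn'[OF x1])
    also have "\<dots> \<le> (1 / sqrt \<epsilon>) * 1" using s1 eps_pos by (intro mult_left_mono) auto
    finally show ?thesis by simp
  qed
  have "r = nm (C (fst \<xi>))" using x(3) ynormV by simp
  also have "\<dots> \<le> \<bar>cc\<bar> * nm (S (fst \<xi>)) + \<bar>dd\<bar> * nm (fst \<xi>)"
    using C_rel x1 by (intro rel_bound) blast
  also have "\<dots> \<le> \<bar>cc\<bar> * 1 + \<bar>dd\<bar> * (1 / sqrt \<epsilon>)"
    using s1 n1 by (intro add_mono mult_left_mono) auto
  finally show "r \<le> \<bar>cc\<bar> * 1 + \<bar>dd\<bar> * (1 / sqrt \<epsilon>)" .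
qed

lemma ynorm_ysm: "fst \<xi> \<in> DS \<Longrightarrow> ynorm ip S (sm a (fst \<xi>), sm a (snd \<xi>)) = cmod a * ynorm ip S \<xi>"
proof -
  assume x: "fst \<xi> \<in> DS"
  have Ss: "S (sm a (fst \<xi>)) = sm a (S (fst \<xi>))" using lin_sm[OF S_lin x] by blast
  have "ynorm ip S (sm a (fst \<xi>), sm a (snd \<xi>)) = sqrt ((cmod a)\<^sup>2 * ((nm (S (fst \<xi>)))\<^sup>2 + (nm (snd \<xi>))\<^sup>2))"
    unfolding ynorm_eq fst_conv snd_conv Ss nm_sm by (simp add: power_mult_distrib algebra_simps)
  also have "\<dots> = cmod a * ynorm ip S \<xi>" unfolding ynorm_eq by (simp add: real_sqrt_mult)
  finally show ?thesis .
qed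

lemma V_bound: assumes x: "\<xi> \<in> Yspace DS"
  shows "nm (C (fst \<xi>)) \<le> yopnorm ip DS S (Vop sm C) * ynorm ip S \<xi>"
proof -
  have x1: "fst \<xi> \<in> DS" using x unfolding Yspace_def by auto
  show ?thesis
  proof (cases "ynorm ip S \<xi> = 0")
    case True
    then have "nm (S (fst \<xi>)) = 0" using ynorm_ge1[of \<xi>] nm_nonneg[of "S (fst \<xi>)"] by linarith
    then have "fst \<xi> = 0" using S_inj0[OF x1] by simp
    then show ?thesis using True lin_0[OF C_lin] by simp
  next
    case False
    define Y where "Y = ynorm ip S \<xi>"
    have Yp: "Y > 0" using False ynorm_nonneg[of \<xi>] Y_def by simp
    define a where "a = complex_of_real (1 / Y)"
    define \<eta> where "\<eta> = (sm a (fst \<xi>), sm a (snd \<xi>))"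
    have ca: "cmod a = 1 / Y" using Yp by (simp add: a_def norm_divide)
    have eY: "\<eta> \<in> Yspace DS" unfolding \<eta>_def Yspace_def using lin_sm[OF S_lin x1] by auto
    have e1: "ynorm ip S \<eta> = 1" unfolding \<eta>_def ynorm_ysm[OF x1] ca Y_def[symmetric] using Yp by simp
    have "ynorm ip S (Vop sm C \<eta>) \<le> yopnorm ip DS S (Vop sm C)"
    proof -
      have "ynorm ip S (Vop sm C \<eta>) \<in> {ynorm ip S (Vop sm C \<xi>) | \<xi>. \<xi> \<in> Yspace DS \<and> ynorm ip S \<xi> \<le> 1}"
        using eY e1 by (intro CollectI exI[of _ \<eta>]) simp
      then show ?thesis unfolding yopnorm_def using Vbdd by (rule cSup_upper)
    qed
    moreover have "ynorm ip S (Vop sm C \<eta>) = nm (C (fst \<xi>)) / Y"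
      unfolding ynormV \<eta>_def fst_conv using lin_sm[OF C_lin x1] nm_sm ca by simp
    ultimately show ?thesis using Yp unfolding Y_def[symmetric] by (simp add: pos_divide_le_eq)
  qed
qed

lemma B_bound: assumes bd: "bounded_on ip DS B" and x: "\<xi> \<in> DS"
  shows "nm (B \<xi>) \<le> opnorm_on ip DS B * nm \<xi>" and "opnorm_on ip DS B \<ge> 0"
proof -
  obtain K where K: "\<forall>\<xi>\<in>DS. nm (B \<xi>) \<le> K * nm \<xi>" using bd unfolding bounded_on_def by blast
  define T where "T = {nm (B \<xi>) | \<xi>. \<xi> \<in> DS \<and> nm \<xi> \<le> 1}"
  have bdd: "bdd_above T" unfolding bdd_above_def
  proof (intro exI ballI)
    fix r assume "r \<in> T"
    then obtain \<zeta> where z: "\<zeta> \<in> DS" "nm \<zeta> \<le> 1" "r = nm (B \<zeta>)" unfolding T_def by blast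
    have "r \<le> K * nm \<zeta>" using K z by simp
    also have "\<dots> \<le> \<bar>K\<bar> * nm \<zeta>" by (intro mult_right_mono) auto
    also have "\<dots> \<le> \<bar>K\<bar> * 1" using z(2) by (intro mult_left_mono) auto
    finally show "r \<le> \<bar>K\<bar>" by simp
  qed
  have "0 \<in> T" unfolding T_def using lin_0[OF B_lin] by force
  then show o0: "opnorm_on ip DS B \<ge> 0" unfolding opnorm_on_def T_def[symmetric] using bdd by (intro cSup_upper2) auto
  show "nm (B \<xi>) \<le> opnorm_on ip DS B * nm \<xi>"
  proof (cases "\<xi> = 0")
    case True then show ?thesis using lin_0[OF B_lin] by simp
  next
    case False
    define Y where "Y = nm \<xi>"
    have Yp: "Y > 0" using False nm_nonneg[of \<xi>] nm_0_iff[of \<xi>] Y_def by linarith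
    define a where "a = complex_of_real (1 / Y)"
    have ca: "cmod a = 1 / Y" using Yp by (simp add: a_def norm_divide)
    have s1: "sm a \<xi> \<in> DS" using lin_sm[OF B_lin x] by blast
    have s2: "nm (sm a \<xi>) = 1" unfolding nm_sm ca Y_def[symmetric] using Yp by simp
    have "nm (B (sm a \<xi>)) \<in> T" unfolding T_def using s1 s2 by (intro CollectI exI[of _ "sm a \<xi>"]) simp
    then have "nm (B (sm a \<xi>)) \<le> opnorm_on ip DS B" unfolding opnorm_on_def T_def[symmetric] using bdd by (rule cSup_upper)
    moreover have "nm (B (sm a \<xi>)) = nm (B \<xi>) / Y" using lin_sm[OF B_lin x] nm_sm ca by simp
    ultimately show ?thesis using Yp unfolding Y_def[symmetric] by (simp add: pos_divide_le_eq)
  qed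
qed


lemma acc_bounds: assumes xi: "\<xi> \<in> DH DA DS" and mu: "\<mu> \<ge> 0"
    and hB: "\<And>q. q \<in> DS \<Longrightarrow> \<bar>Im (ip q (B q))\<bar> \<le> \<mu> * (nm q)\<^sup>2"
  shows "Re (yip ip S \<xi> (Gplus sm A B C \<xi>)) \<ge> - (\<mu> + yopnorm ip DS S (Vop sm C)) * Re (yip ip S \<xi> \<xi>) \<and>
         Re (yip ip S \<xi> (Gminus sm A B C \<xi>)) \<ge> - (\<mu> + yopnorm ip DS S (Vop sm C)) * Re (yip ip S \<xi> \<xi>)"
proof -
  obtain p q where pq: "\<xi> = (p, q)" "p \<in> DA" "q \<in> DS" using xi unfolding DH_def by auto
  define Y where "Y = ynorm ip S \<xi>"
  define V where "V = yopnorm ip DS S (Vop sm C)"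
  have Y0: "Y \<ge> 0" unfolding Y_def by (rule ynorm_nonneg)
  have RY: "Re (yip ip S \<xi> \<xi>) = Y\<^sup>2" unfolding Y_def ynorm_sq ..
  have qY: "nm q \<le> Y" using ynorm_ge2[of \<xi>] pq Y_def by simp
  have xY: "\<xi> \<in> Yspace DS" using pq DA_sub unfolding Yspace_def by auto
  have CY: "nm (C p) \<le> V * Y" using V_bound[OF xY] pq unfolding V_def Y_def by simp
  have c1: "\<bar>Re (ip q (C p))\<bar> \<le> V * Y\<^sup>2"
  proof -
    have "\<bar>Re (ip q (C p))\<bar> \<le> nm q * nm (C p)" by (rule abs_re_ip_le)
    also have "\<dots> \<le> Y * (V * Y)" using qY CY Y0 by (intro mult_mono) auto
    finally show ?thesis by (simp add: power2_eq_square mult_ac)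
  qed
  have b1: "\<bar>Im (ip q (B q))\<bar> \<le> \<mu> * Y\<^sup>2"
  proof -
    have "\<bar>Im (ip q (B q))\<bar> \<le> \<mu> * (nm q)\<^sup>2" using hB[OF pq(3)] .
    also have "\<dots> \<le> \<mu> * Y\<^sup>2" using qY mu by (intro mult_left_mono power_mono) auto
    finally show ?thesis .
  qed
  define E where "E = Re (yip ip S \<xi> (Gplus sm A B C \<xi>))"
  have E: "E = - Im (ip q (B q)) + Re (ip q (C p))" unfolding E_def pq(1) using acc_plus[OF pq(2,3)] .
  have Em: "Re (yip ip S \<xi> (Gminus sm A B C \<xi>)) = - E" unfolding E_def pq(1) using acc_minus[OF pq(2,3)] by simp
  have "\<bar>E\<bar> \<le> (\<mu> + V) * Y\<^sup>2" using E b1 c1 by (simp add: algebra_simps)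
  then show ?thesis unfolding RY Em E_def[symmetric] V_def[symmetric] by linarith
qed

lemma sym_case: "symmetric_on ip DS B \<Longrightarrow> q \<in> DS \<Longrightarrow> \<bar>Im (ip q (B q))\<bar> \<le> 0 * (nm q)\<^sup>2"
proof -
  assume "symmetric_on ip DS B" "q \<in> DS"
  then have "ip (B q) q = ip q (B q)" unfolding symmetric_on_def by blast
  moreover have "ip (B q) q = cnj (ip q (B q))" by (rule ip_sym)
  ultimately have "Im (ip q (B q)) = Im (cnj (ip q (B q)))" by simp
  then show ?thesis by simp
qed

lemma bdd_case: "bounded_on ip DS B \<Longrightarrow> q \<in> DS \<Longrightarrow> \<bar>Im (ip q (B q))\<bar> \<le> opnorm_on ip DS B * (nm q)\<^sup>2"
proof -
  assume b: "bounded_on ip DS B" and q: "q \<in> DS"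
  have "\<bar>Im (ip q (B q))\<bar> \<le> nm q * nm (B q)" by (rule abs_im_ip_le)
  also have "\<dots> \<le> nm q * (opnorm_on ip DS B * nm q)" using B_bound(1)[OF b q] by (intro mult_left_mono) auto
  finally show ?thesis by (simp add: power2_eq_square mult_ac)
qed

lemma ynorm_pair: "ynorm ip S (u, v) = sqrt ((nm (S u))\<^sup>2 + (nm v)\<^sup>2)"
  unfolding ynorm_eq by simp

lemma closed_plus:
  assumes fD: "\<And>n. f n \<in> DH DA DS" and xY: "x \<in> Yspace DS" and yY: "y \<in> Yspace DS"
    and cx: "(\<lambda>n. ynorm ip S (ydiff (f n) x)) \<longlonglongrightarrow> 0"
    and cy: "(\<lambda>n. ynorm ip S (ydiff (Gplus sm A B C (f n)) y)) \<longlonglongrightarrow> 0"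
  shows "x \<in> DH DA DS \<and> Gplus sm A B C x = y"
proof -
  define p where "p n = fst (f n)" for n
  define q where "q n = snd (f n)" for n
  obtain x1 x2 where xx: "x = (x1, x2)" by fastforce
  obtain y1 y2 where yy: "y = (y1, y2)" by fastforce
  have x1: "x1 \<in> DS" using xY xx unfolding Yspace_def by auto
  have y1: "y1 \<in> DS" using yY yy unfolding Yspace_def by auto
  have pD: "p n \<in> DA" and qD: "q n \<in> DS" for n using fD[of n] unfolding DH_def p_def q_def by auto
  have pS: "p n \<in> DS" for n using DA_sub[OF pD] by auto
  have fpq: "f n = (p n, q n)" for n unfolding p_def q_def by simp
  define X where "X n = A (p n) + sm \<i> (B (q n)) + C (p n)" for n
  have dx: "ydiff (f n) x = (p n - x1, q n - x2)" for n unfolding ydiff_def fpq xx by simp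
  have dy: "ydiff (Gplus sm A B C (f n)) y = (- q n - y1, X n - y2)" for n
    unfolding ydiff_def fpq yy Gplus_eq X_def by simp
  have cSp: "conv (\<lambda>n. S (p n)) (S x1)"
  proof (rule conv_by[OF _ cx])
    fix n
    have "S (p n) - S x1 = S (p n - x1)" using lin_diff[OF S_lin pS x1] by simp
    then show "nm (S (p n) - S x1) \<le> ynorm ip S (ydiff (f n) x)" using ynorm_ge1[of "ydiff (f n) x"] dx by simp
  qed
  have cq: "conv q x2"
  proof (rule conv_by[OF _ cx])
    fix n show "nm (q n - x2) \<le> ynorm ip S (ydiff (f n) x)" using ynorm_ge2[of "ydiff (f n) x"] dx by simp
  qed
  have cSq: "conv (\<lambda>n. S (q n)) (- S y1)"
  proof (rule conv_by[OF _ cy])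
    fix n
    have "S (- q n - y1) = - S (q n) - S y1"
      using lin_diff[OF S_lin lin_minus[OF S_lin qD, THEN conjunct1] y1] lin_minus[OF S_lin qD] by simp
    also have "- S (q n) - S y1 = - (S (q n) - - S y1)" by (simp add: algebra_simps)
    finally have "nm (S (- q n - y1)) = nm (- (S (q n) - - S y1))" by (rule arg_cong)
    then have "nm (S (q n) - - S y1) = nm (S (- q n - y1))" unfolding nm_minus by simp
    then show "nm (S (q n) - - S y1) \<le> ynorm ip S (ydiff (Gplus sm A B C (f n)) y)"
      using ynorm_ge1[of "ydiff (Gplus sm A B C (f n)) y"] dy by simp
  qed
  have cX: "conv X y2"
  proof (rule conv_by[OF _ cy])
    fix n show "nm (X n - y2) \<le> ynorm ip S (ydiff (Gplus sm A B C (f n)) y)"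
      using ynorm_ge2[of "ydiff (Gplus sm A B C (f n)) y"] dy by simp
  qed
  have x2: "x2 \<in> DS" "S x2 = - S y1" using S_closed[OF qD cq cSq] by auto
  have "S (x2 + y1) = 0" using lin_add[OF S_lin x2(1) y1] x2(2) by simp
  then have "x2 + y1 = 0" using S_inj0 lin_add[OF S_lin x2(1) y1] by blast
  then have y1e: "y1 = - x2" by (simp add: eq_neg_iff_add_eq_0 add.commute)
  have cSq2: "conv (\<lambda>n. S (q n)) (S x2)" using cSq x2(2) by simp
  have cp: "conv p x1"
  proof (rule conv_by)
    fix n
    have "nm (p n - x1) \<le> (1 / sqrt \<epsilon>) * nm (S (p n - x1))"
      using Kn' lin_diff[OF S_lin pS x1] by blast
    then show "nm (p n - x1) \<le> (1 / sqrt \<epsilon>) * nm (S (p n) - S x1)" using lin_diff[OF S_lin pS x1] by simp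
    show "(\<lambda>n. (1 / sqrt \<epsilon>) * nm (S (p n) - S x1)) \<longlonglongrightarrow> 0"
      using cSp unfolding conv_def by (rule tendsto_mult_right_zero)
  qed
  have cq0: "(\<lambda>n. nm (q n - x2)) \<longlonglongrightarrow> 0" using cq unfolding conv_def .
  have cp0: "(\<lambda>n. nm (p n - x1)) \<longlonglongrightarrow> 0" using cp unfolding conv_def .
  have cSp0: "(\<lambda>n. nm (S (p n) - S x1)) \<longlonglongrightarrow> 0" using cSp unfolding conv_def .
  have cSq0: "(\<lambda>n. nm (S (q n) - S x2)) \<longlonglongrightarrow> 0" using cSq2 unfolding conv_def .
  have cC: "conv (\<lambda>n. C (p n)) (C x1)"
  proof (rule conv_by)
    fix n
    have e: "C (p n) - C x1 = C (p n - x1)" "S (p n) - S x1 = S (p n - x1)"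
      using lin_diff[OF C_lin pS x1] lin_diff[OF S_lin pS x1] by auto
    have "p n - x1 \<in> DS" using lin_diff[OF S_lin pS x1] by blast
    then show "nm (C (p n) - C x1) \<le> \<bar>cc\<bar> * nm (S (p n) - S x1) + \<bar>dd\<bar> * nm (p n - x1)"
      unfolding e using C_rel by (intro rel_bound) blast
    show "(\<lambda>n. \<bar>cc\<bar> * nm (S (p n) - S x1) + \<bar>dd\<bar> * nm (p n - x1)) \<longlonglongrightarrow> 0"
      using tendsto_add[OF tendsto_mult_right_zero[OF cSp0] tendsto_mult_right_zero[OF cp0]] by simp
  qed
  have cB: "conv (\<lambda>n. B (q n)) (B x2)"
  proof (rule conv_by)
    fix n
    have e: "B (q n) - B x2 = B (q n - x2)" "S (q n) - S x2 = S (q n - x2)"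
      using lin_diff[OF B_lin qD x2(1)] lin_diff[OF S_lin qD x2(1)] by auto
    have "q n - x2 \<in> DS" using lin_diff[OF S_lin qD x2(1)] by blast
    then show "nm (B (q n) - B x2) \<le> \<bar>aa\<bar> * nm (S (q n) - S x2) + \<bar>bb\<bar> * nm (q n - x2)"
      unfolding e using B_rel by (intro rel_bound) blast
    show "(\<lambda>n. \<bar>aa\<bar> * nm (S (q n) - S x2) + \<bar>bb\<bar> * nm (q n - x2)) \<longlonglongrightarrow> 0"
      using tendsto_add[OF tendsto_mult_right_zero[OF cSq0] tendsto_mult_right_zero[OF cq0]] by simp
  qed
  define w where "w = y2 - sm \<i> (B x2) - C x1"
  have "conv (\<lambda>n. X n - sm \<i> (B (q n)) - C (p n)) w"
    unfolding w_def by (intro conv_diff cX conv_sm cB cC)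
  moreover have "X n - sm \<i> (B (q n)) - C (p n) = A (p n)" for n unfolding X_def by simp
  ultimately have cA: "conv (\<lambda>n. A (p n)) w" by simp
  have "conv (\<lambda>n. S (S (p n))) w" using cA SS[OF pD] by simp
  then have Sx1: "S x1 \<in> DS" "S (S x1) = w" using S_closed[of "\<lambda>n. S (p n)", OF _ cSp] DA_sub[OF pD] by auto
  have x1A: "x1 \<in> DA" using DA_eq x1 Sx1(1) by blast
  have Ax1: "A x1 = w" using SS[OF x1A] Sx1(2) by simp
  have "x \<in> DH DA DS" unfolding xx DH_def using x1A x2(1) by simp
  moreover have "Gplus sm A B C x = y" unfolding xx yy Gplus_eq Ax1 w_def y1e by simp
  ultimately show ?thesis ..
qed


lemma closed_minus:
  assumes fD: "\<And>n. f n \<in> DH DA DS" and xY: "x \<in> Yspace DS" and yY: "y \<in> Yspace DS"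
    and cx: "(\<lambda>n. ynorm ip S (ydiff (f n) x)) \<longlonglongrightarrow> 0"
    and cy: "(\<lambda>n. ynorm ip S (ydiff (Gminus sm A B C (f n)) y)) \<longlonglongrightarrow> 0"
  shows "x \<in> DH DA DS \<and> Gminus sm A B C x = y"
proof -
  obtain y1 y2 where yy: "y = (y1, y2)" by fastforce
  have y1: "y1 \<in> DS" using yY yy unfolding Yspace_def by auto
  define y' where "y' = (- y1, - y2)"
  have yY': "y' \<in> Yspace DS" unfolding y'_def Yspace_def using lin_minus[OF S_lin y1] by auto
  have eq: "ynorm ip S (ydiff (Gplus sm A B C (f n)) y') = ynorm ip S (ydiff (Gminus sm A B C (f n)) y)" for n
  proof -
    obtain p q where pq: "f n = (p, q)" "q \<in> DS" using fD[of n] unfolding DH_def by auto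
    have u: "q - y1 \<in> DS" "S (- (q - y1)) = - S (q - y1)"
      using lin_diff[OF S_lin pq(2) y1] lin_minus[OF S_lin, of "q - y1"] by auto
    have "ydiff (Gplus sm A B C (f n)) y' = (- (q - y1), - (- (A p + sm \<i> (B q) + C p) - y2))"
      unfolding pq Gplus_eq ydiff_def y'_def by simp
    moreover have "ydiff (Gminus sm A B C (f n)) y = (q - y1, - (A p + sm \<i> (B q) + C p) - y2)"
      unfolding pq Gminus_eq ydiff_def yy by simp
    moreover have "ynorm ip S (- (q - y1), - v) = ynorm ip S (q - y1, v)" for v
      unfolding ynorm_pair u(2) nm_minus ..
    ultimately show ?thesis by (simp only:)
  qed
  have "x \<in> DH DA DS \<and> Gplus sm A B C x = y'"
    using closed_plus[OF fD xY yY' cx] cy unfolding eq by blast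
  moreover have "Gplus sm A B C x = y' \<Longrightarrow> Gminus sm A B C x = y"
  proof -
    obtain x1 x2 where xx: "x = (x1, x2)" by fastforce
    assume "Gplus sm A B C x = y'"
    then have h: "A x1 + sm \<i> (B x2) + C x1 = - y2" "x2 = y1" unfolding xx Gplus_eq y'_def by auto
    show ?thesis unfolding xx Gminus_eq h(1) yy by (simp add: h(2))
  qed
  ultimately show ?thesis by blast
qed

end

theorem lemma6:
  fixes sm :: "complex \<Rightarrow> 'x::ab_group_add \<Rightarrow> 'x"
    and ip :: "'x \<Rightarrow> 'x \<Rightarrow> complex"
    and DA DS :: "'x set"
    and A S B C :: "'x \<Rightarrow> 'x"
    and \<epsilon> a b c d :: real
  assumes hilb: "complex_hilbert sm ip"
    and nontriv: "\<exists>x::'x. x \<noteq> 0"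
    and A_lin: "linear_on sm DA A"
    and A_dense: "dense_h ip DA"
    and A_sa: "selfadjoint_h ip DA A"
    and eps_pos: "\<epsilon> > 0"
    and A_coercive: "\<forall>\<xi>\<in>DA. Re (ip \<xi> (A \<xi>)) \<ge> \<epsilon> * Re (ip \<xi> \<xi>)"
    and S_sqrt: "pos_sqrt_of sm ip DS S DA A"
    and B_lin: "linear_on sm DS B"
    and a_range: "0 \<le> a" "a < 1"
    and B_rel: "\<forall>\<xi>\<in>DS. (hnorm ip (B \<xi>))\<^sup>2 \<le> a\<^sup>2 * (hnorm ip (S \<xi>))\<^sup>2 + b\<^sup>2 * (hnorm ip \<xi>)\<^sup>2"
    and B_sym_or_bdd: "symmetric_on ip DS B \<or> bounded_on ip DS B"
    and C_lin: "linear_on sm DS C"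
    and C_rel: "\<forall>\<xi>\<in>DS. (hnorm ip (C \<xi>))\<^sup>2 \<le> c\<^sup>2 * (hnorm ip (S \<xi>))\<^sup>2 + d\<^sup>2 * (hnorm ip \<xi>)\<^sup>2"
  shows "yclosed ip DS S (DH DA DS) (Gplus sm A B C) \<and>
         yclosed ip DS S (DH DA DS) (Gminus sm A B C) \<and>
         yquasi_accretive ip S (DH DA DS) (Gplus sm A B C) \<and>
         yquasi_accretive ip S (DH DA DS) (Gminus sm A B C) \<and>
         (symmetric_on ip DS B \<longrightarrow>
            (\<forall>\<xi>\<in>DH DA DS.
               Re (yip ip S \<xi> (Gplus sm A B C \<xi>)) \<ge> - (0 + yopnorm ip DS S (Vop sm C)) * Re (yip ip S \<xi> \<xi>) \<and>
               Re (yip ip S \<xi> (Gminus sm A B C \<xi>)) \<ge> - (0 + yopnorm ip DS S (Vop sm C)) * Re (yip ip S \<xi> \<xi>))) \<and>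
         (bounded_on ip DS B \<longrightarrow>
            (\<forall>\<xi>\<in>DH DA DS.
               Re (yip ip S \<xi> (Gplus sm A B C \<xi>)) \<ge> - (opnorm_on ip DS B + yopnorm ip DS S (Vop sm C)) * Re (yip ip S \<xi> \<xi>) \<and>
               Re (yip ip S \<xi> (Gminus sm A B C \<xi>)) \<ge> - (opnorm_on ip DS B + yopnorm ip DS S (Vop sm C)) * Re (yip ip S \<xi> \<xi>)))"
proof -
  interpret F: full sm ip DA DS A S \<epsilon> B C a b c d
    by (intro full.intro setting.intro chs.intro setting_axioms.intro full_axioms.intro)
       (fact hilb A_lin A_dense A_sa eps_pos A_coercive S_sqrt B_lin B_rel C_lin C_rel)+
  have c1: "yclosed ip DS S (DH DA DS) (Gplus sm A B C)"
    unfolding yclosed_def using F.closed_plus by blast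
  have c2: "yclosed ip DS S (DH DA DS) (Gminus sm A B C)"
    unfolding yclosed_def using F.closed_minus by blast
  have s: "symmetric_on ip DS B \<longrightarrow>
            (\<forall>\<xi>\<in>DH DA DS.
               Re (yip ip S \<xi> (Gplus sm A B C \<xi>)) \<ge> - (0 + yopnorm ip DS S (Vop sm C)) * Re (yip ip S \<xi> \<xi>) \<and>
               Re (yip ip S \<xi> (Gminus sm A B C \<xi>)) \<ge> - (0 + yopnorm ip DS S (Vop sm C)) * Re (yip ip S \<xi> \<xi>))"
    using F.acc_bounds[of _ 0] F.sym_case by simp
  have bd: "bounded_on ip DS B \<longrightarrow>
            (\<forall>\<xi>\<in>DH DA DS.
               Re (yip ip S \<xi> (Gplus sm A B C \<xi>)) \<ge> - (opnorm_on ip DS B + yopnorm ip DS S (Vop sm C)) * Re (yip ip S \<xi> \<xi>) \<and>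
               Re (yip ip S \<xi> (Gminus sm A B C \<xi>)) \<ge> - (opnorm_on ip DS B + yopnorm ip DS S (Vop sm C)) * Re (yip ip S \<xi> \<xi>))"
  proof (intro impI ballI)
    fix \<xi> assume b: "bounded_on ip DS B" and x: "\<xi> \<in> DH DA DS"
    have "opnorm_on ip DS B \<ge> 0" using F.B_bound(2)[OF b F.DS0] .
    then show "Re (yip ip S \<xi> (Gplus sm A B C \<xi>)) \<ge> - (opnorm_on ip DS B + yopnorm ip DS S (Vop sm C)) * Re (yip ip S \<xi> \<xi>) \<and>
               Re (yip ip S \<xi> (Gminus sm A B C \<xi>)) \<ge> - (opnorm_on ip DS B + yopnorm ip DS S (Vop sm C)) * Re (yip ip S \<xi> \<xi>)"
      using F.acc_bounds[OF x] F.bdd_case[OF b] by blast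
  qed
  have q: "yquasi_accretive ip S (DH DA DS) (Gplus sm A B C) \<and> yquasi_accretive ip S (DH DA DS) (Gminus sm A B C)"
    using B_sym_or_bdd
  proof
    assume "symmetric_on ip DS B"
    then show ?thesis using s unfolding yquasi_accretive_def by blast
  next
    assume "bounded_on ip DS B"
    then show ?thesis using bd unfolding yquasi_accretive_def by blast
  qed
  show ?thesis using c1 c2 q s bd by blast
qed

end
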